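(* Let $\lambda$ be a nonzero real number, $x$ real, and $n\ge0$ an integer. Then $$\sum_{k=0}^{n}S_{1,\lambda}(n,k)\,\mathcal{E}_{k,\lambda}(x)=n!\sum_{k=0}^{n}\binom{x}{k}\Big(-\frac{1}{2}\Big)^{n-k},$$ and $$\mathcal{E}_{n,\lambda}(x)=\sum_{k=0}^{n}k!\,S_{2,\lambda}(n,k)\sum_{j=0}^{k}\binom{x}{j}\Big(-\frac{1}{2}\Big)^{k-j}.$$
   Context: For real $x$ and integer $k\ge0$: $(x)_{0,\lambda}=1$, $(x)_{k,\lambda}=x(x-\lambda)\cdots(x-(k-1)\lambda)$; $(x)_0=1$, $(x)_k=x(x-1)\cdots(x-k+1)$. The degenerate exponential is $e_\lambda^x(t)=\sum_{k\ge0}(x)_{k,\lambda}t^k/k!=(1+\lambda t)^{x/\lambda}$, and $e_\lambda(t)=e^1_\lambda(t)$. The degenerate Euler polynomials are defined by $\frac{2}{e_\lambda(t)+1}e_\lambda^x(t)=\sum_{n\ge0}\mathcal{E}_{n,\lambda}(x)\frac{t^n}{n!}$. The degenerate Stirling numbers are defined by $(x)_{n}=\sum_{k=0}^{n}S_{1,\lambda}(n,k)(x)_{k,\lambda}$ and $(x)_{n,\lambda}=\sum_{k=0}^{n}S_{2,\lambda}(n,k)(x)_{k}$ ($n\ge0$). *)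

theory Defs
  imports Complex_Main "HOL-Computational_Algebra.Formal_Power_Series"
begin

definition dfall :: "real \<Rightarrow> nat \<Rightarrow> real \<Rightarrow> real" where
  "dfall lam k x = (\<Prod>i<k. x - of_nat i * lam)"

definition falling :: "nat \<Rightarrow> real \<Rightarrow> real" where
  "falling k x = (\<Prod>i<k. x - of_nat i)"

definition deg_exp_fps :: "real \<Rightarrow> real \<Rightarrow> real fps" where
  "deg_exp_fps lam x = Abs_fps (\<lambda>k. dfall lam k x / fact k)"

definition deg_euler :: "real \<Rightarrow> nat \<Rightarrow> real \<Rightarrow> real" where
  "deg_euler lam n x =
     fact n * fps_nth (2 * inverse (deg_exp_fps lam 1 + 1) * deg_exp_fps lam x) n"

definition deg_stirling1 :: "real \<Rightarrow> nat \<Rightarrow> nat \<Rightarrow> real" where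
  "deg_stirling1 lam n =
     (THE c. (\<forall>k>n. c k = 0) \<and> (\<forall>x. falling n x = (\<Sum>k\<le>n. c k * dfall lam k x)))"

definition deg_stirling2 :: "real \<Rightarrow> nat \<Rightarrow> nat \<Rightarrow> real" where
  "deg_stirling2 lam n =
     (THE c. (\<forall>k>n. c k = 0) \<and> (\<forall>x. dfall lam n x = (\<Sum>k\<le>n. c k * falling k x)))"

end

theory Submission imports Defs "HOL-Computational_Algebra.Polynomial" begin

definition dP :: "real \<Rightarrow> nat \<Rightarrow> real poly" where
  "dP lam k = (\<Prod>i<k. [:- of_nat i * lam, 1:])"

lemma poly_dP: "poly (dP lam k) x = dfall lam k x"
  by (simp add: dP_def dfall_def poly_prod)

lemma dP_Suc: "dP lam (Suc k) = dP lam k * [:- of_nat k * lam, 1:]"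
  by (simp add: dP_def lessThan_Suc mult.commute)

lemma dP_monic: "degree (dP lam k) = k \<and> lead_coeff (dP lam k) = 1"
proof (induction k)
  case 0 then show ?case by (simp add: dP_def)
next
  case (Suc k)
  have nz: "dP lam k \<noteq> 0" using Suc by auto
  have L: "[:- of_nat k * lam, 1:] \<noteq> 0" "degree [:- of_nat k * lam, 1:] = 1" "lead_coeff [:- of_nat k * lam, 1:] = 1"
    by simp_all
  have "degree (dP lam (Suc k)) = Suc k"
    unfolding dP_Suc using degree_mult_eq[OF nz L(1)] L(2) Suc by simp
  moreover have "lead_coeff (dP lam (Suc k)) = 1"
    using lead_coeff_mult[of "dP lam k" "[:- of_nat k * lam, 1:]"] L(3) Suc
    apply (simp only: dP_Suc)
    apply (simp only: \<open>degree (dP lam (Suc k)) = Suc k\<close>[unfolded dP_Suc])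
    apply (metis mult_1_right)
    done
  ultimately show ?case by simp
qed

lemma coeff_dP: "k < m \<Longrightarrow> coeff (dP lam k) m = 0"
  using dP_monic[of lam k] by (simp add: coeff_eq_0)

lemma coeff_dP_self: "coeff (dP lam n) n = 1"
  using dP_monic[of lam n] by metis

lemma uniq_top:
  assumes "\<forall>x. (\<Sum>k\<le>n. d k * dfall lam k x) = 0"
  shows "d n = 0"
proof -
  define Q where "Q = (\<Sum>k\<le>n. smult (d k) (dP lam k))"
  have "poly Q = poly 0" using assms by (auto simp: Q_def poly_sum poly_dP)
  then have Q0: "Q = 0" using poly_eq_poly_eq_iff by blast
  have "coeff Q n = (\<Sum>k\<le>n. d k * coeff (dP lam k) n)" by (simp add: Q_def coeff_sum)
  also have "\<dots> = (\<Sum>k\<le>n. if k = n then d n else 0)"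
    by (rule sum.cong) (auto simp: coeff_dP coeff_dP_self)
  also have "\<dots> = d n" by simp
  finally show ?thesis using Q0 by simp
qed

lemma uniq:
  assumes "\<forall>x. (\<Sum>k\<le>n. d k * dfall lam k x) = 0" "k \<le> n"
  shows "d k = 0"
  using assms
proof (induction n arbitrary: k)
  case 0
  have "d 0 = 0" using uniq_top[where n=0 and d=d and lam=lam] 0(1) by blast
  then show ?case using 0(2) by simp
next
  case (Suc n)
  have t: "d (Suc n) = 0" using uniq_top Suc.prems(1) by blast
  have h: "\<forall>x. (\<Sum>k\<le>n. d k * dfall lam k x) = 0" using Suc.prems(1) t by simp
  show ?case
  proof (cases "k = Suc n")
    case True then show ?thesis using t by simp
  next
    case False
    then have "k \<le> n" using Suc.prems(2) by simp
    then show ?thesis using Suc.IH[OF h] by blast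
  qed
qed

lemma dfall_Suc: "dfall lam (Suc k) x = dfall lam k x * (x - of_nat k * lam)"
  by (simp add: dfall_def lessThan_Suc mult.commute)

lemma exist: "\<exists>c. (\<forall>k>n. c k = 0) \<and> (\<forall>x. dfall mu n x = (\<Sum>k\<le>n. c k * dfall lam k x))"
proof (induction n)
  case 0
  show ?case by (rule exI[of _ "\<lambda>k. if k = 0 then 1 else 0"]) (simp add: dfall_def)
next
  case (Suc n)
  then obtain c where c0: "\<forall>k>n. c k = 0" and c: "\<forall>x. dfall mu n x = (\<Sum>k\<le>n. c k * dfall lam k x)"
    by blast
  define c' where "c' k = (if k = 0 then 0 else c (k - 1)) + (of_nat k * lam - of_nat n * mu) * c k" for k
  have "\<forall>k>Suc n. c' k = 0" using c0 by (auto simp: c'_def)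
  moreover have "dfall mu (Suc n) x = (\<Sum>k\<le>Suc n. c' k * dfall lam k x)" for x
  proof -
    have "dfall mu (Suc n) x = (\<Sum>k\<le>n. c k * (dfall lam k x * (x - of_nat n * mu)))"
      by (simp add: dfall_Suc c sum_distrib_right mult.assoc)
    also have "\<dots> = (\<Sum>k\<le>n. c k * dfall lam (Suc k) x) + (\<Sum>k\<le>n. (of_nat k * lam - of_nat n * mu) * c k * dfall lam k x)"
      by (simp add: dfall_Suc sum.distrib[symmetric] algebra_simps)
    also have "(\<Sum>k\<le>n. (of_nat k * lam - of_nat n * mu) * c k * dfall lam k x)
       = (\<Sum>k\<le>Suc n. (of_nat k * lam - of_nat n * mu) * c k * dfall lam k x)"
      using c0 by simp
    also have "(\<Sum>k\<le>n. c k * dfall lam (Suc k) x) = (\<Sum>k\<le>Suc n. (if k = 0 then 0 else c (k - 1)) * dfall lam k x)"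
      by (subst sum.atMost_Suc_shift) simp
    finally show ?thesis by (simp add: c'_def sum.distrib[symmetric] algebra_simps)
  qed
  ultimately show ?case by blast
qed

lemma ex1: "\<exists>!c. (\<forall>k>n. c k = 0) \<and> (\<forall>x. dfall mu n x = (\<Sum>k\<le>n. c k * dfall lam k x))"
  proof (rule ex_ex1I)
    show "\<exists>c. (\<forall>k>n. c k = 0) \<and> (\<forall>x. dfall mu n x = (\<Sum>k\<le>n. c k * dfall lam k x))"
      by (rule exist)
  next
    fix c1 c2
    assume 1: "(\<forall>k>n. c1 k = 0) \<and> (\<forall>x. dfall mu n x = (\<Sum>k\<le>n. c1 k * dfall lam k x))"
      and 2: "(\<forall>k>n. c2 k = 0) \<and> (\<forall>x. dfall mu n x = (\<Sum>k\<le>n. c2 k * dfall lam k x))"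
    have "\<forall>x. (\<Sum>k\<le>n. (c1 k - c2 k) * dfall lam k x) = 0"
      using 1 2 by (auto simp: left_diff_distrib sum_subtractf)
    then have "\<forall>k\<le>n. c1 k - c2 k = 0" using uniq[where n=n and d="\<lambda>k. c1 k - c2 k" and lam=lam] by blast
    then show "c1 = c2"
    proof (intro ext)
      fix k assume h: "\<forall>k\<le>n. c1 k - c2 k = 0"
      show "c1 k = c2 k"
      proof (cases "k \<le> n")
        case True then show ?thesis using h by simp
      next
        case False then show ?thesis using 1 2 by simp
      qed
    qed
  qed

lemma the_prop:
  "(\<forall>k>n. (THE c. (\<forall>k>n. c k = 0) \<and> (\<forall>x. dfall mu n x = (\<Sum>k\<le>n. c k * dfall lam k x))) k = 0) \<and>
   (\<forall>x. dfall mu n x = (\<Sum>k\<le>n. (THE c. (\<forall>k>n. c k = 0) \<and> (\<forall>x. dfall mu n x = (\<Sum>k\<le>n. c k * dfall lam k x))) k * dfall lam k x))"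
  by (rule theI'[OF ex1])

lemma falling_dfall: "falling k x = dfall 1 k x"
  by (simp add: falling_def dfall_def)

lemma S1: "falling n x = (\<Sum>k\<le>n. deg_stirling1 lam n k * dfall lam k x)"
proof -
  have e: "deg_stirling1 lam n = (THE c. (\<forall>k>n. c k = 0) \<and> (\<forall>x. dfall 1 n x = (\<Sum>k\<le>n. c k * dfall lam k x)))"
    unfolding deg_stirling1_def falling_dfall ..
  have "\<forall>x. dfall 1 n x = (\<Sum>k\<le>n. (THE c. (\<forall>k>n. c k = 0) \<and> (\<forall>x. dfall 1 n x = (\<Sum>k\<le>n. c k * dfall lam k x))) k * dfall lam k x)"
    using the_prop[where n=n and mu=1 and lam=lam] by (rule conjunct2)
  then show ?thesis unfolding falling_dfall e by (rule spec)
qed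

lemma S2: "dfall lam n x = (\<Sum>k\<le>n. deg_stirling2 lam n k * falling k x)"
proof -
  have e: "deg_stirling2 lam n = (THE c. (\<forall>k>n. c k = 0) \<and> (\<forall>x. dfall lam n x = (\<Sum>k\<le>n. c k * dfall 1 k x)))"
    unfolding deg_stirling2_def falling_dfall ..
  have "\<forall>x. dfall lam n x = (\<Sum>k\<le>n. (THE c. (\<forall>k>n. c k = 0) \<and> (\<forall>x. dfall lam n x = (\<Sum>k\<le>n. c k * dfall 1 k x))) k * dfall 1 k x)"
    using the_prop[where n=n and mu=lam and lam=1] by (rule conjunct2)
  then show ?thesis unfolding falling_dfall e by (rule spec)
qed

lemma fact_gchoose: "fact k * (x gchoose k) = falling k (x::real)"
  by (simp add: gbinomial_prod_rev falling_def atLeast0LessThan)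

lemma dfall_gchoose:
  assumes "lam \<noteq> 0"
  shows "dfall lam k x / fact k = lam ^ k * ((x / lam) gchoose k)"
proof -
  have "lam ^ k * (fact k * ((x / lam) gchoose k)) = (\<Prod>i<k. lam) * (\<Prod>i<k. x / lam - of_nat i)"
    by (simp add: fact_gchoose falling_def)
  also have "\<dots> = dfall lam k x"
    unfolding dfall_def prod.distrib[symmetric] using assms by (intro prod.cong) (auto simp: field_simps)
  finally show ?thesis by (simp add: field_simps)
qed

lemma dexp_add:
  assumes "lam \<noteq> 0"
  shows "deg_exp_fps lam (x + y) = deg_exp_fps lam x * deg_exp_fps lam y"
proof (rule fps_ext)
  fix n
  have "fps_nth (deg_exp_fps lam x * deg_exp_fps lam y) n
      = (\<Sum>i=0..n. lam ^ i * ((x / lam) gchoose i) * (lam ^ (n - i) * ((y / lam) gchoose (n - i))))"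
    by (simp add: fps_mult_nth deg_exp_fps_def dfall_gchoose[OF assms])
  also have "\<dots> = lam ^ n * (\<Sum>i=0..n. ((x / lam) gchoose i) * ((y / lam) gchoose (n - i)))"
    unfolding sum_distrib_left
  proof (intro sum.cong refl)
    fix i assume "i \<in> {0..n}"
    then have e: "lam ^ i * lam ^ (n - i) = lam ^ n" by (simp add: power_add[symmetric])
    then show "lam ^ i * ((x / lam) gchoose i) * (lam ^ (n - i) * ((y / lam) gchoose (n - i)))
      = lam ^ n * (((x / lam) gchoose i) * ((y / lam) gchoose (n - i)))"
    proof -
      have "lam ^ i * ((x / lam) gchoose i) * (lam ^ (n - i) * ((y / lam) gchoose (n - i)))
        = (lam ^ i * lam ^ (n - i)) * (((x / lam) gchoose i) * ((y / lam) gchoose (n - i)))"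
        by (simp only: mult_ac)
      then show ?thesis by (simp only: e)
    qed
  qed
  also have "\<dots> = lam ^ n * ((x / lam + y / lam) gchoose n)"
    by (simp add: gbinomial_Vandermonde)
  also have "\<dots> = fps_nth (deg_exp_fps lam (x + y)) n"
    by (simp add: deg_exp_fps_def dfall_gchoose[OF assms] add_divide_distrib)
  finally show "fps_nth (deg_exp_fps lam (x + y)) n = fps_nth (deg_exp_fps lam x * deg_exp_fps lam y) n" ..
qed

lemma euler_rec:
  assumes "lam \<noteq> 0"
  shows "deg_euler lam n (x + 1) + deg_euler lam n x = 2 * dfall lam n x"
proof -
  define A where "A = deg_exp_fps lam 1 + 1"
  have A0: "fps_nth A 0 \<noteq> 0" by (simp add: A_def deg_exp_fps_def dfall_def)
  have "2 * inverse A * deg_exp_fps lam (x + 1) + 2 * inverse A * deg_exp_fps lam x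
      = 2 * deg_exp_fps lam x * (inverse A * A)"
    by (simp add: dexp_add[OF assms] A_def algebra_simps)
  also have "\<dots> = fps_const 2 * deg_exp_fps lam x" using inverse_mult_eq_1[OF A0] by (simp add: numeral_fps_const)
  finally have "fps_nth (2 * inverse A * deg_exp_fps lam (x + 1)) n + fps_nth (2 * inverse A * deg_exp_fps lam x) n
      = fps_nth (fps_const 2 * deg_exp_fps lam x) n" by (metis fps_add_nth)
  also have "\<dots> = 2 * (dfall lam n x / fact n)" by (simp only: fps_mult_left_const_nth deg_exp_fps_def fps_nth_Abs_fps)
  finally have e: "fps_nth (2 * inverse A * deg_exp_fps lam (x + 1)) n + fps_nth (2 * inverse A * deg_exp_fps lam x) n
      = 2 * (dfall lam n x / fact n)" .
  show ?thesis unfolding deg_euler_def A_def[symmetric]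
    by (simp only: distrib_left[symmetric] e) simp
qed

definition polyfun :: "(real \<Rightarrow> real) \<Rightarrow> bool" where
  "polyfun f \<longleftrightarrow> (\<exists>p. f = poly p)"

lemma polyfun_const: "polyfun (\<lambda>x. c)"
  unfolding polyfun_def by (rule exI[of _ "[:c:]"]) auto

lemma polyfun_add: "polyfun f \<Longrightarrow> polyfun g \<Longrightarrow> polyfun (\<lambda>x. f x + g x)"
  proof -
  assume "polyfun f" "polyfun g"
  then obtain p q where "f = poly p" "g = poly q" unfolding polyfun_def by blast
  then have "(\<lambda>x. f x + g x) = poly (p + q)" by (auto simp: fun_eq_iff)
  then show ?thesis unfolding polyfun_def by blast
qed

lemma polyfun_diff: "polyfun f \<Longrightarrow> polyfun g \<Longrightarrow> polyfun (\<lambda>x. f x - g x)"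
  proof -
  assume "polyfun f" "polyfun g"
  then obtain p q where "f = poly p" "g = poly q" unfolding polyfun_def by blast
  then have "(\<lambda>x. f x - g x) = poly (p - q)" by (auto simp: fun_eq_iff)
  then show ?thesis unfolding polyfun_def by blast
qed

lemma polyfun_mult: "polyfun f \<Longrightarrow> polyfun g \<Longrightarrow> polyfun (\<lambda>x. f x * g x)"
  proof -
  assume "polyfun f" "polyfun g"
  then obtain p q where "f = poly p" "g = poly q" unfolding polyfun_def by blast
  then have "(\<lambda>x. f x * g x) = poly (p * q)" by (auto simp: fun_eq_iff)
  then show ?thesis unfolding polyfun_def by blast
qed

lemma polyfun_sum: "(\<And>k. k \<in> A \<Longrightarrow> polyfun (f k)) \<Longrightarrow> polyfun (\<lambda>x. \<Sum>k\<in>A. f k x)"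
proof (induction A rule: infinite_finite_induct)
  case (infinite A) then show ?case by (simp add: polyfun_const)
next
  case empty then show ?case by (simp add: polyfun_const)
next
  case (insert a A) then show ?case by (simp add: polyfun_add)
qed

lemma polyfun_dfall: "polyfun (dfall lam k)"
  unfolding polyfun_def by (rule exI[of _ "dP lam k"]) (simp add: fun_eq_iff poly_dP)

lemma polyfun_gchoose: "polyfun (\<lambda>x. x gchoose k)"
proof -
  have "(\<lambda>x. x gchoose k) = (\<lambda>x. dfall 1 k x * (1 / fact k))"
    using fact_gchoose falling_dfall by (auto simp: field_simps)
  then show ?thesis by (simp only:) (rule polyfun_mult[OF polyfun_dfall polyfun_const])
qed

lemma polyfun_euler: "polyfun (deg_euler lam n)"
proof -
  define B where "B = 2 * inverse (deg_exp_fps lam 1 + 1)"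
  have "deg_euler lam n = (\<lambda>x. fact n * (\<Sum>i=0..n. fps_nth B i * (dfall lam (n - i) x * (1 / fact (n - i)))))"
  proof (rule ext)
    fix x
    show "deg_euler lam n x = fact n * (\<Sum>i=0..n. fps_nth B i * (dfall lam (n - i) x * (1 / fact (n - i))))"
      unfolding deg_euler_def unfolding B_def[symmetric] unfolding fps_mult_nth[of B]
      unfolding deg_exp_fps_def fps_nth_Abs_fps
      by (simp only: divide_inverse mult_1_left)
  qed
  then show ?thesis
    by (simp only:) (intro polyfun_mult polyfun_const polyfun_sum polyfun_dfall)
qed

lemma antiperiodic:
  assumes "polyfun g" "\<And>x. g (x + 1) = - g x"
  shows "g x = 0"
proof -
  obtain p where p: "g = poly p" using assms(1) unfolding polyfun_def by blast
  have ev: "g (of_nat (2 * m)) = g 0" for m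
  proof (induction m)
    case 0 then show ?case by simp
  next
    case (Suc m)
    have "g (of_nat (2 * Suc m)) = g (of_nat (2 * m) + 1 + 1)" by (simp add: algebra_simps)
    also have "\<dots> = - g (of_nat (2 * m) + 1)" by (rule assms(2))
    also have "\<dots> = g (of_nat (2 * m))" by (simp only: assms(2) minus_minus)
    finally show ?case using Suc by simp
  qed
  define q where "q = p - [:poly p 0:]"
  have "range (\<lambda>m. real (2 * m)) \<subseteq> {x. poly q x = 0}"
    using ev by (auto simp: q_def p)
  moreover have "infinite (range (\<lambda>m. real (2 * m)))"
    by (rule range_inj_infinite) (auto simp: inj_def)
  ultimately have "infinite {x. poly q x = 0}" using finite_subset by blast
  then have "q = 0" using poly_roots_finite by blast
  then have c: "g y = g 0" for y
  proof -
    have "poly q y = 0" using \<open>q = 0\<close> by simp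
    then show ?thesis by (simp add: q_def p)
  qed
  have "g 0 = 0" using assms(2)[of 0] c[of 1] by simp
  then show ?thesis using c by simp
qed

definition T :: "nat \<Rightarrow> real \<Rightarrow> real" where
  "T n x = (\<Sum>k\<le>n. (x gchoose k) * (- 1 / 2) ^ (n - k))"

lemma T_Suc: "T (Suc n) x = (- 1 / 2) * T n x + (x gchoose Suc n)"
proof -
  have "(\<Sum>k\<le>n. (x gchoose k) * (- 1 / 2) ^ (Suc n - k)) = (- 1 / 2) * T n x"
    unfolding T_def sum_distrib_left by (intro sum.cong) (auto simp: Suc_diff_le)
  then show ?thesis by (simp add: T_def)
qed

lemma T_rec: "T n (x + 1) + T n x = 2 * (x gchoose n)"
proof (induction n)
  case 0 then show ?case by (simp add: T_def)
next
  case (Suc n)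
  have g: "(x + 1) gchoose Suc n = (x gchoose n) + (x gchoose Suc n)" by (rule gbinomial_Suc_Suc)
  show ?case unfolding T_Suc g using Suc.IH by (simp add: algebra_simps)
qed

lemma polyfun_T: "polyfun (T n)"
proof -
  have "T n = (\<lambda>x. \<Sum>k\<le>n. (x gchoose k) * (- 1 / 2) ^ (n - k))" by (auto simp: T_def)
  then show ?thesis by (simp add: polyfun_sum polyfun_mult polyfun_gchoose polyfun_const)
qed

lemma eq_from_rec:
  assumes "polyfun f" "polyfun g" "\<And>x. f (x + 1) + f x = g (x + 1) + g x"
  shows "f x = g x"
proof -
  have "(\<lambda>x. f x - g x) x = 0"
    by (rule antiperiodic) (use assms in \<open>auto simp: polyfun_diff algebra_simps\<close>)
  then show ?thesis by simp
qed

theorem theorem4: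
  fixes lam x :: real and n :: nat
  assumes "lam \<noteq> 0"
  shows "(\<Sum>k\<le>n. deg_stirling1 lam n k * deg_euler lam k x)
           = fact n * (\<Sum>k\<le>n. (x gchoose k) * (- 1 / 2) ^ (n - k))
       \<and> deg_euler lam n x
           = (\<Sum>k\<le>n. fact k * deg_stirling2 lam n k *
                (\<Sum>j\<le>k. (x gchoose j) * (- 1 / 2) ^ (k - j)))"
proof
  show "(\<Sum>k\<le>n. deg_stirling1 lam n k * deg_euler lam k x)
           = fact n * (\<Sum>k\<le>n. (x gchoose k) * (- 1 / 2) ^ (n - k))"
    unfolding T_def[symmetric]
  proof (rule eq_from_rec[where f="\<lambda>x. \<Sum>k\<le>n. deg_stirling1 lam n k * deg_euler lam k x"
        and g="\<lambda>x. fact n * T n x"])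
    show "polyfun (\<lambda>x. \<Sum>k\<le>n. deg_stirling1 lam n k * deg_euler lam k x)"
      by (simp add: polyfun_sum polyfun_mult polyfun_const polyfun_euler)
    show "polyfun (\<lambda>x. fact n * T n x)"
      by (simp add: polyfun_mult polyfun_const polyfun_T)
    fix y
    have "(\<Sum>k\<le>n. deg_stirling1 lam n k * deg_euler lam k (y + 1)) + (\<Sum>k\<le>n. deg_stirling1 lam n k * deg_euler lam k y)
        = (\<Sum>k\<le>n. deg_stirling1 lam n k * (deg_euler lam k (y + 1) + deg_euler lam k y))"
      by (simp add: sum.distrib[symmetric] algebra_simps)
    also have "\<dots> = (\<Sum>k\<le>n. deg_stirling1 lam n k * (2 * dfall lam k y))"
      by (simp only: euler_rec[OF assms])
    also have "\<dots> = 2 * (\<Sum>k\<le>n. deg_stirling1 lam n k * dfall lam k y)"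
      by (simp add: sum_distrib_left mult_ac)
    also have "\<dots> = 2 * falling n y"
      by (simp only: S1[of n y lam, symmetric])
    also have "\<dots> = fact n * T n (y + 1) + fact n * T n y"
      by (simp add: distrib_left[symmetric] T_rec fact_gchoose[symmetric])
    finally show "(\<Sum>k\<le>n. deg_stirling1 lam n k * deg_euler lam k (y + 1)) + (\<Sum>k\<le>n. deg_stirling1 lam n k * deg_euler lam k y)
        = fact n * T n (y + 1) + fact n * T n y" .
  qed
next
  show "deg_euler lam n x
           = (\<Sum>k\<le>n. fact k * deg_stirling2 lam n k *
                (\<Sum>j\<le>k. (x gchoose j) * (- 1 / 2) ^ (k - j)))"
    unfolding T_def[symmetric]
  proof (rule eq_from_rec[where f="deg_euler lam n"
        and g="\<lambda>x. \<Sum>k\<le>n. fact k * deg_stirling2 lam n k * T k x"])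
    show "polyfun (deg_euler lam n)" by (rule polyfun_euler)
    show "polyfun (\<lambda>x. \<Sum>k\<le>n. fact k * deg_stirling2 lam n k * T k x)"
      by (simp add: polyfun_sum polyfun_mult polyfun_const polyfun_T)
    fix y
    have "(\<Sum>k\<le>n. fact k * deg_stirling2 lam n k * T k (y + 1)) + (\<Sum>k\<le>n. fact k * deg_stirling2 lam n k * T k y)
        = (\<Sum>k\<le>n. deg_stirling2 lam n k * (fact k * (T k (y + 1) + T k y)))"
      by (simp add: sum.distrib[symmetric] algebra_simps)
    also have "\<dots> = (\<Sum>k\<le>n. deg_stirling2 lam n k * (fact k * (2 * (y gchoose k))))"
      by (simp only: T_rec)
    also have "\<dots> = (\<Sum>k\<le>n. deg_stirling2 lam n k * (2 * falling k y))"
      by (simp add: fact_gchoose[symmetric] mult_ac)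
    also have "\<dots> = 2 * dfall lam n y"
      by (simp add: S2[of lam n y] sum_distrib_left algebra_simps)
    also have "\<dots> = deg_euler lam n (y + 1) + deg_euler lam n y"
      by (simp only: euler_rec[OF assms])
    finally show "deg_euler lam n (y + 1) + deg_euler lam n y =
        (\<Sum>k\<le>n. fact k * deg_stirling2 lam n k * T k (y + 1)) + (\<Sum>k\<le>n. fact k * deg_stirling2 lam n k * T k y)"
      by simp
  qed
qed

end
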